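(* For any parameters $a,b,t>0$ with $1/t<1/a<b<t$ and $\rho>0$, up to congruence and dilation the image of the upper half-plane under $z\mapsto\operatorname{Re}\int^z\big(\tfrac12(\phi_2-\phi_1),\tfrac i2(\phi_2+\phi_1),dh\big)$ is a minimal surface with the following boundary behaviour: the interval $v_8v_1$ (through $\infty$) and the interval $[v_4,v_5]$ are mapped to straight segments parallel to the $x$-axis (not necessarily in the plane $y=0$); $[v_1,v_2]$ (resp. $[v_5,v_6]$) is mapped to a planar symmetry curve in the plane $x=+A$ (resp. $x=-A$); $[v_2,v_3]$ (resp. $[v_6,v_7]$) is mapped to a planar symmetry curve in the plane $y=-B$ (resp. $y=+B$); $[v_3,v_4]$ (resp. $[v_7,v_8]$) is mapped to a planar symmetry curve in the plane $x=+A'$ (resp. $x=-A'$), for some constants $A,A',B$. Moreover the image is symmetric under the inversion in the image of $i$.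
   Context: Weierstrass data: for real $a,b,t>0$ with $1/t<1/a<b<t$ and $\rho>0$, on the upper half-plane set $\phi_1=-\rho\,(z+a)^{1/2}(z+1/b)^{-1/2}(z-1/a)^{1/2}(z-b)^{-1/2}[(z+t)(z+1/t)(z-1/t)(z-t)]^{-1/2}dz$, $\phi_2=\rho^{-1}(z+a)^{-1/2}(z+1/b)^{1/2}(z-1/a)^{-1/2}(z-b)^{1/2}[(z+t)(z+1/t)(z-1/t)(z-t)]^{-1/2}dz$, $dh=i[(z+t)(z+1/t)(z-1/t)(z-t)]^{-1/2}dz$ (square roots continuous on the upper half-plane, each factor $(z-c)^{\pm1/2}$ positive for real $z>c$), and let $v_1<\dots<v_8$ be $-t,-a,-1/b,-1/t,1/t,1/a,b,t$. *)

theory Defs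
  imports "HOL-Complex_Analysis.Complex_Analysis"
begin

definition UHP :: "complex set" where
  "UHP = {z. Im z > 0}"

text \<open>For z in the
  upper half-plane, z - c has argument in (0, pi), so this branch is continuous on the
  upper half-plane and positive for real z > c, as required in the paper.\<close>
definition fpow :: "real \<Rightarrow> real \<Rightarrow> complex \<Rightarrow> complex" where
  "fpow c e z = (z - complex_of_real c) powr complex_of_real e"

definition Qfac :: "real \<Rightarrow> complex \<Rightarrow> complex" where
  "Qfac t z = fpow (-t) (-1/2) z * fpow (-1/t) (-1/2) z * fpow (1/t) (-1/2) z * fpow t (-1/2) z"

text \<open>Coefficients of dz in phi_1, phi_2 and dh.\<close>
definition phi1 :: "real \<Rightarrow> real \<Rightarrow> real \<Rightarrow> real \<Rightarrow> complex \<Rightarrow> complex" where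
  "phi1 a b t \<rho> z = - complex_of_real \<rho> * fpow (-a) (1/2) z * fpow (-1/b) (-1/2) z
      * fpow (1/a) (1/2) z * fpow b (-1/2) z * Qfac t z"

definition phi2 :: "real \<Rightarrow> real \<Rightarrow> real \<Rightarrow> real \<Rightarrow> complex \<Rightarrow> complex" where
  "phi2 a b t \<rho> z = complex_of_real (1/\<rho>) * fpow (-a) (-1/2) z * fpow (-1/b) (1/2) z
      * fpow (1/a) (-1/2) z * fpow b (1/2) z * Qfac t z"

definition dhc :: "real \<Rightarrow> complex \<Rightarrow> complex" where
  "dhc t z = \<i> * Qfac t z"

text \<open>The Weierstrass map  z \<mapsto> Re \<integral>^z ((phi2-phi1)/2, i(phi2+phi1)/2, dh),
  integrated from the base point i along the segment [i, z] (the upper half-plane is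
  convex; another base point only changes the map by a translation).\<close>
definition WX :: "real \<Rightarrow> real \<Rightarrow> real \<Rightarrow> real \<Rightarrow> complex \<Rightarrow> real^3" where
  "WX a b t \<rho> z = vector
     [ Re (contour_integral (linepath \<i> z) (\<lambda>w. (phi2 a b t \<rho> w - phi1 a b t \<rho> w) / 2)),
       Re (contour_integral (linepath \<i> z) (\<lambda>w. \<i> * (phi2 a b t \<rho> w + phi1 a b t \<rho> w) / 2)),
       Re (contour_integral (linepath \<i> z) (\<lambda>w. dhc t w)) ]"

definition pderiv_dir :: "(complex \<Rightarrow> 'b::real_normed_vector) \<Rightarrow> complex \<Rightarrow> complex \<Rightarrow> 'b" where
  "pderiv_dir f v z = frechet_derivative f (at z) v"

definition harmonic_on :: "complex set \<Rightarrow> (complex \<Rightarrow> real) \<Rightarrow> bool" where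
  "harmonic_on S u \<longleftrightarrow> (\<forall>z\<in>S. u differentiable (at z)
      \<and> (\<lambda>w. pderiv_dir u 1 w) differentiable (at z)
      \<and> (\<lambda>w. pderiv_dir u \<i> w) differentiable (at z)
      \<and> pderiv_dir (\<lambda>w. pderiv_dir u 1 w) 1 z + pderiv_dir (\<lambda>w. pderiv_dir u \<i> w) \<i> z = 0)"

definition minimal_surface_on :: "complex set \<Rightarrow> (complex \<Rightarrow> real^3) \<Rightarrow> bool" where
  "minimal_surface_on S Y \<longleftrightarrow>
     (\<forall>z\<in>S. Y differentiable (at z)
        \<and> pderiv_dir Y 1 z \<bullet> pderiv_dir Y \<i> z = 0
        \<and> norm (pderiv_dir Y 1 z) = norm (pderiv_dir Y \<i> z)
        \<and> pderiv_dir Y 1 z \<noteq> 0)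
     \<and> (\<forall>j. harmonic_on S (\<lambda>z. Y z $ j))"

text \<open>The boundary interval I (of real numbers) is mapped to a planar symmetry curve in the
  plane {p. p$j = c}: the boundary values lie in the plane (Dirichlet condition) and the
  surface meets the plane orthogonally, i.e. the conormal derivative d/dy of the other two
  coordinates vanishes (Neumann condition; Schwarz reflection).\<close>
definition planar_symmetry_curve :: "(complex \<Rightarrow> real^3) \<Rightarrow> real set \<Rightarrow> 3 \<Rightarrow> real \<Rightarrow> bool" where
  "planar_symmetry_curve Y I j c \<longleftrightarrow>
     (\<forall>s\<in>I. ((\<lambda>z. Y z $ j) \<longlongrightarrow> c) (at (complex_of_real s) within UHP)
        \<and> (\<forall>k. k \<noteq> j \<longrightarrow>
             ((\<lambda>z. pderiv_dir (\<lambda>w. Y w $ k) \<i> z) \<longlongrightarrow> 0) (at (complex_of_real s) within UHP)))"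

definition maps_to_xline :: "(complex \<Rightarrow> real^3) \<Rightarrow> real set \<Rightarrow> real \<Rightarrow> real \<Rightarrow> bool" where
  "maps_to_xline Y I c2 c3 \<longleftrightarrow>
     (\<forall>s\<in>I. ((\<lambda>z. Y z $ 2) \<longlongrightarrow> c2) (at (complex_of_real s) within UHP)
        \<and> ((\<lambda>z. Y z $ 3) \<longlongrightarrow> c3) (at (complex_of_real s) within UHP))"

end

theory Submission
  imports Defs
begin

lemma open_UHP: "open UHP"
  unfolding UHP_def by (simp add: open_halfspace_Im_gt)

lemma convex_UHP: "convex UHP"
  unfolding UHP_def by (simp add: convex_halfspace_Im_gt)

lemma UHP_not_nonpos: "z \<in> UHP \<Longrightarrow> z - complex_of_real c \<notin> \<real>\<^sub>\<le>\<^sub>0"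
  unfolding UHP_def by (auto simp: complex_nonpos_Reals_iff)

lemma fpow_holo: "fpow c e holomorphic_on UHP"
  unfolding fpow_def
  by (intro holomorphic_intros) (auto simp: UHP_not_nonpos)

lemma prim_deriv_within:
  assumes "f holomorphic_on S" "convex S" "a \<in> S" "x \<in> S"
  shows "((\<lambda>z. contour_integral (linepath a z) f) has_field_derivative f x) (at x within S)"
proof (rule triangle_contour_integrals_convex_primitive)
  show "continuous_on S f" using assms(1) holomorphic_on_imp_continuous_on by blast
  have seg: "\<And>u v. u \<in> S \<Longrightarrow> v \<in> S \<Longrightarrow> closed_segment u v \<subseteq> S"
    using assms(2) by (simp add: convex_contains_segment)
  fix b c assume "b \<in> S" "c \<in> S"
  have "(f has_contour_integral 0) (linepath a b +++ linepath b c +++ linepath c a)"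
  proof (rule Cauchy_theorem_convex_simple[OF assms(1) assms(2)])
    show "path_image (linepath a b +++ linepath b c +++ linepath c a) \<subseteq> S"
      using seg assms \<open>b\<in>S\<close> \<open>c\<in>S\<close> by (auto simp: path_image_join)
  qed auto
  then show "contour_integral (linepath a b) f + contour_integral (linepath b c) f +
                     contour_integral (linepath c a) f = 0"
    by (rule has_chain_integral_chain_integral3)
qed (use assms in auto)

lemma prim_deriv:
  assumes "f holomorphic_on S" "open S" "convex S" "a \<in> S" "x \<in> S"
  shows "((\<lambda>z. contour_integral (linepath a z) f) has_field_derivative f x) (at x)"
proof -
  have e: "at x within S = at x" by (rule at_within_open[OF assms(5,2)])
  show ?thesis using prim_deriv_within[OF assms(1,3,4,5)] unfolding e .
qed

lemma Re_comp_deriv: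
  assumes "(f has_field_derivative D) (at x within S)"
  shows "((\<lambda>z. Re (f z)) has_derivative (\<lambda>h. Re (D * h))) (at x within S)"
proof -
  have "(f has_derivative (\<lambda>h. D * h)) (at x within S)"
    using assms by (simp add: has_field_derivative_def)
  from bounded_linear.has_derivative[OF bounded_linear_Re this] show ?thesis .
qed

definition G :: "(complex \<Rightarrow> complex) \<Rightarrow> complex \<Rightarrow> complex" where
  "G f z = contour_integral (linepath \<i> z) f"

lemma ii_UHP: "\<i> \<in> UHP" by (simp add: UHP_def)

lemma G_deriv: "f holomorphic_on UHP \<Longrightarrow> z \<in> UHP \<Longrightarrow> (G f has_field_derivative f z) (at z)"
  unfolding G_def[abs_def] by (rule prim_deriv[OF _ open_UHP convex_UHP ii_UHP])

lemma ReG_deriv: "f holomorphic_on UHP \<Longrightarrow> z \<in> UHP \<Longrightarrow>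
   ((\<lambda>w. Re (G f w)) has_derivative (\<lambda>h. Re (f z * h))) (at z)"
  by (rule Re_comp_deriv[OF G_deriv])

lemma ReG_pderiv: "f holomorphic_on UHP \<Longrightarrow> z \<in> UHP \<Longrightarrow>
   pderiv_dir (\<lambda>w. Re (G f w)) v z = Re (f z * v)"
  unfolding pderiv_dir_def by (simp add: frechet_derivative_at[OF ReG_deriv, symmetric])

lemma ReG_harmonic:
  assumes f: "f holomorphic_on UHP"
  shows "harmonic_on UHP (\<lambda>w. Re (G f w))"
  unfolding harmonic_on_def
proof
  fix z assume z: "z \<in> UHP"
  have fd: "(f has_field_derivative deriv f z) (at z)"
    by (rule holomorphic_derivI[OF f open_UHP z])
  have d1: "((\<lambda>w. pderiv_dir (\<lambda>w. Re (G f w)) 1 w) has_derivative (\<lambda>h. Re (deriv f z * h))) (at z)"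
    by (rule has_derivative_transform_within_open[OF Re_comp_deriv[OF fd] open_UHP z])
       (simp add: ReG_pderiv[OF f])
  have d2: "((\<lambda>w. pderiv_dir (\<lambda>w. Re (G f w)) \<i> w) has_derivative (\<lambda>h. Re ((\<i> * deriv f z) * h))) (at z)"
    by (rule has_derivative_transform_within_open[OF Re_comp_deriv[OF DERIV_cmult[OF fd, of \<i>]] open_UHP z])
       (simp add: ReG_pderiv[OF f] mult.commute)
  show "(\<lambda>w. Re (G f w)) differentiable at z \<and>
          (\<lambda>w. pderiv_dir (\<lambda>w. Re (G f w)) 1 w) differentiable at z \<and>
          (\<lambda>w. pderiv_dir (\<lambda>w. Re (G f w)) \<i> w) differentiable at z \<and>
          pderiv_dir (\<lambda>w. pderiv_dir (\<lambda>w. Re (G f w)) 1 w) 1 z +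
          pderiv_dir (\<lambda>w. pderiv_dir (\<lambda>w. Re (G f w)) \<i> w) \<i> z = 0"
  proof (intro conjI)
    show "(\<lambda>w. Re (G f w)) differentiable at z" using ReG_deriv[OF f z] unfolding differentiable_def by blast
    show "(\<lambda>w. pderiv_dir (\<lambda>w. Re (G f w)) 1 w) differentiable at z" using d1 unfolding differentiable_def by blast
    show "(\<lambda>w. pderiv_dir (\<lambda>w. Re (G f w)) \<i> w) differentiable at z" using d2 unfolding differentiable_def by blast
    have e1: "pderiv_dir (\<lambda>w. pderiv_dir (\<lambda>w. Re (G f w)) 1 w) 1 z = Re (deriv f z)"
      unfolding pderiv_dir_def[of "\<lambda>w. pderiv_dir (\<lambda>w. Re (G f w)) 1 w" 1 z] frechet_derivative_at[OF d1, symmetric] by simp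
    have e2: "pderiv_dir (\<lambda>w. pderiv_dir (\<lambda>w. Re (G f w)) \<i> w) \<i> z = Re ((\<i> * deriv f z) * \<i>)"
      unfolding pderiv_dir_def[of "\<lambda>w. pderiv_dir (\<lambda>w. Re (G f w)) \<i> w" \<i> z] frechet_derivative_at[OF d2, symmetric] by simp
    show "pderiv_dir (\<lambda>w. pderiv_dir (\<lambda>w. Re (G f w)) 1 w) 1 z +
          pderiv_dir (\<lambda>w. pderiv_dir (\<lambda>w. Re (G f w)) \<i> w) \<i> z = 0"
      unfolding e1 e2 by simp
  qed
qed

lemma iso_vec:
  fixes w1 w2 w3 :: complex
  assumes s: "w1^2 + w2^2 + w3^2 = 0" and w3: "w3 \<noteq> 0"
  shows "(vector [Re w1, Re w2, Re w3] :: real^3) \<bullet> vector [Re (w1*\<i>), Re (w2*\<i>), Re (w3*\<i>)] = 0"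
    "norm (vector [Re w1, Re w2, Re w3] :: real^3) = norm (vector [Re (w1*\<i>), Re (w2*\<i>), Re (w3*\<i>)] :: real^3)"
    "(vector [Re w1, Re w2, Re w3] :: real^3) \<noteq> 0"
proof -
  have r: "(Re w1)^2 - (Im w1)^2 + ((Re w2)^2 - (Im w2)^2) + ((Re w3)^2 - (Im w3)^2) = 0"
    using arg_cong[OF s, of Re] by (simp add: power2_eq_square)
  have i: "Re w1 * Im w1 + Re w2 * Im w2 + Re w3 * Im w3 = 0"
    using arg_cong[OF s, of Im] by (simp add: power2_eq_square algebra_simps)
  show "(vector [Re w1, Re w2, Re w3] :: real^3) \<bullet> vector [Re (w1*\<i>), Re (w2*\<i>), Re (w3*\<i>)] = 0"
    using i by (simp add: inner_vec_def sum_3)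
  have "(vector [Re w1, Re w2, Re w3] :: real^3) \<bullet> vector [Re w1, Re w2, Re w3]
        = (vector [Re (w1*\<i>), Re (w2*\<i>), Re (w3*\<i>)] :: real^3) \<bullet> vector [Re (w1*\<i>), Re (w2*\<i>), Re (w3*\<i>)]"
    using r by (simp add: inner_vec_def sum_3 power2_eq_square)
  then show "norm (vector [Re w1, Re w2, Re w3] :: real^3) = norm (vector [Re (w1*\<i>), Re (w2*\<i>), Re (w3*\<i>)] :: real^3)"
    by (simp add: norm_eq_sqrt_inner)
  show "(vector [Re w1, Re w2, Re w3] :: real^3) \<noteq> 0"
  proof
    assume "(vector [Re w1, Re w2, Re w3] :: real^3) = 0"
    then have z: "Re w1 = 0" "Re w2 = 0" "Re w3 = 0"
      by (metis vector_3 zero_index)+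
    then have "(Im w1)^2 + (Im w2)^2 + (Im w3)^2 = 0" using r by simp
    then have "(Im w3)^2 = 0" by (smt (verit) zero_le_power2)
    then have "Im w3 = 0" by simp
    then show False using w3 z complex_eq_iff by auto
  qed
qed

lemma vector3_deriv:
  assumes "(f1 has_derivative g1) F" "(f2 has_derivative g2) F" "(f3 has_derivative g3) F"
  shows "((\<lambda>z. vector [f1 z, f2 z, f3 z] :: real^3) has_derivative (\<lambda>h. vector [g1 h, g2 h, g3 h])) F"
proof -
  have e: "\<And>x y z. (vector [x, y, z] :: real^3) = x *\<^sub>R axis 1 1 + y *\<^sub>R axis 2 1 + z *\<^sub>R axis 3 1"
    by (simp add: vec_eq_iff forall_3 axis_def)
  show ?thesis unfolding e
    by (intro has_derivative_add bounded_linear.has_derivative[OF bounded_linear_scaleR_left] assms)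
qed

definition F1 :: "real \<Rightarrow> real \<Rightarrow> real \<Rightarrow> real \<Rightarrow> complex \<Rightarrow> complex" where
  "F1 a b t \<rho> = (\<lambda>w. (phi2 a b t \<rho> w - phi1 a b t \<rho> w) / 2)"
definition F2 :: "real \<Rightarrow> real \<Rightarrow> real \<Rightarrow> real \<Rightarrow> complex \<Rightarrow> complex" where
  "F2 a b t \<rho> = (\<lambda>w. \<i> * (phi2 a b t \<rho> w + phi1 a b t \<rho> w) / 2)"

lemma WX_eq: "WX a b t \<rho> = (\<lambda>z. vector [Re (G (F1 a b t \<rho>) z), Re (G (F2 a b t \<rho>) z), Re (G (dhc t) z)])"
  by (intro ext) (simp add: WX_def G_def F1_def F2_def)

lemma fpow_holo' [holomorphic_intros]: "(\<lambda>z. fpow c e z) holomorphic_on UHP"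
  using fpow_holo by simp

lemma Qfac_holo [holomorphic_intros]: "(\<lambda>z. Qfac t z) holomorphic_on UHP"
  unfolding Qfac_def by (intro holomorphic_intros)

lemma phi1_holo [holomorphic_intros]: "(\<lambda>z. phi1 a b t \<rho> z) holomorphic_on UHP"
  unfolding phi1_def by (intro holomorphic_intros)
lemma phi2_holo [holomorphic_intros]: "(\<lambda>z. phi2 a b t \<rho> z) holomorphic_on UHP"
  unfolding phi2_def by (intro holomorphic_intros)
lemma dhc_holo [holomorphic_intros]: "(\<lambda>z. dhc t z) holomorphic_on UHP"
  unfolding dhc_def by (intro holomorphic_intros)
lemma F1_holo: "F1 a b t \<rho> holomorphic_on UHP"
  unfolding F1_def by (intro holomorphic_intros) auto
lemma F2_holo: "F2 a b t \<rho> holomorphic_on UHP"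
  unfolding F2_def by (intro holomorphic_intros) auto
lemma F3_holo: "dhc t holomorphic_on UHP"
  using dhc_holo by simp

lemma UHP_ne: "z \<in> UHP \<Longrightarrow> z \<noteq> complex_of_real c"
  by (auto simp: UHP_def)

lemma fpow_inv: "z \<noteq> complex_of_real c \<Longrightarrow> e + e' = 0 \<Longrightarrow> fpow c e z * fpow c e' z = 1"
  unfolding fpow_def powr_def
  by (simp add: exp_add[symmetric] distrib_right[symmetric] flip: of_real_add)

lemma fpow_nz: "z \<noteq> complex_of_real c \<Longrightarrow> fpow c e z \<noteq> 0"
  unfolding fpow_def by simp

lemma fpow_nz_UHP: "z \<in> UHP \<Longrightarrow> fpow c e z \<noteq> 0"
  using fpow_nz UHP_ne by blast

lemma Qfac_nz: "z \<in> UHP \<Longrightarrow> Qfac t z \<noteq> 0"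
  unfolding Qfac_def using fpow_nz_UHP by simp

lemma fpow_inv_UHP: "z \<in> UHP \<Longrightarrow> e + e' = 0 \<Longrightarrow> fpow c e z * fpow c e' z = 1"
  using fpow_inv UHP_ne by blast

lemma phi12: "z \<in> UHP \<Longrightarrow> \<rho> \<noteq> 0 \<Longrightarrow> phi1 a b t \<rho> z * phi2 a b t \<rho> z = - ((Qfac t z)^2)"
proof -
  assume z: "z \<in> UHP" and r: "\<rho> \<noteq> 0"
  have "phi1 a b t \<rho> z * phi2 a b t \<rho> z = - (complex_of_real \<rho> * complex_of_real (1/\<rho>))
     * (fpow (-a) (1/2) z * fpow (-a) (-1/2) z) * (fpow (-1/b) (-1/2) z * fpow (-1/b) (1/2) z)
     * (fpow (1/a) (1/2) z * fpow (1/a) (-1/2) z) * (fpow b (-1/2) z * fpow b (1/2) z) * (Qfac t z)^2"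
    unfolding phi1_def phi2_def by (simp add: power2_eq_square mult_ac)
  also have "\<dots> = - ((Qfac t z)^2)"
    using z r by (simp add: fpow_inv_UHP flip: of_real_mult)
  finally show ?thesis .
qed

lemma F_iso: "z \<in> UHP \<Longrightarrow> \<rho> \<noteq> 0 \<Longrightarrow> (F1 a b t \<rho> z)^2 + (F2 a b t \<rho> z)^2 + (dhc t z)^2 = 0"
proof -
  assume z: "z \<in> UHP" and r: "\<rho> \<noteq> 0"
  have "(F1 a b t \<rho> z)^2 + (F2 a b t \<rho> z)^2 + (dhc t z)^2 = - (phi1 a b t \<rho> z * phi2 a b t \<rho> z) - ((Qfac t z)^2)"
    unfolding F1_def F2_def dhc_def by (simp add: power2_eq_square field_simps)
  then show ?thesis using phi12[OF z r] by simp
qed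

lemma WX_deriv: "z \<in> UHP \<Longrightarrow> (WX a b t \<rho> has_derivative
   (\<lambda>h. vector [Re (F1 a b t \<rho> z * h), Re (F2 a b t \<rho> z * h), Re (dhc t z * h)])) (at z)"
  unfolding WX_eq by (intro vector3_deriv ReG_deriv F1_holo F2_holo F3_holo)

lemma WX_pderiv: "z \<in> UHP \<Longrightarrow> pderiv_dir (WX a b t \<rho>) v z =
   vector [Re (F1 a b t \<rho> z * v), Re (F2 a b t \<rho> z * v), Re (dhc t z * v)]"
  unfolding pderiv_dir_def by (simp add: frechet_derivative_at[OF WX_deriv, symmetric])

lemma WX_minimal: "\<rho> \<noteq> 0 \<Longrightarrow> minimal_surface_on UHP (WX a b t \<rho>)"
  unfolding minimal_surface_on_def
proof (intro conjI ballI allI)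
  fix z assume z: "z \<in> UHP" and r: "\<rho> \<noteq> 0"
  have d3: "dhc t z \<noteq> 0" using Qfac_nz[OF z] by (simp add: dhc_def)
  note I = iso_vec[OF F_iso[OF z r] d3]
  show "WX a b t \<rho> differentiable at z" using WX_deriv[OF z] unfolding differentiable_def by blast
  show "pderiv_dir (WX a b t \<rho>) 1 z \<bullet> pderiv_dir (WX a b t \<rho>) \<i> z = 0"
    using I(1) by (simp add: WX_pderiv[OF z])
  show "norm (pderiv_dir (WX a b t \<rho>) 1 z) = norm (pderiv_dir (WX a b t \<rho>) \<i> z)"
    using I(2) by (simp add: WX_pderiv[OF z])
  show "pderiv_dir (WX a b t \<rho>) 1 z \<noteq> 0"
    using I(3) by (simp add: WX_pderiv[OF z])
next
  fix j :: 3
  show "harmonic_on UHP (\<lambda>z. WX a b t \<rho> z $ j)"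
    using exhaust_3[of j] by (auto simp add: WX_eq ReG_harmonic F1_holo F2_holo F3_holo)
qed

lemma neg_inv_UHP: "z \<in> UHP \<Longrightarrow> -1/z \<in> UHP"
proof -
  assume z: "z \<in> UHP"
  then have "Im z > 0" by (simp add: UHP_def)
  moreover have "Im (-1/z) = Im z / ((Re z)^2 + (Im z)^2)"
    by (simp add: Im_divide power2_eq_square)
  moreover have "(Re z)^2 + (Im z)^2 > 0" using \<open>Im z > 0\<close>
    by (simp add: add_nonneg_pos)
  ultimately show ?thesis by (simp add: UHP_def)
qed

lemma neg_inv_UHP': "z \<in> UHP \<Longrightarrow> -(1/z) \<in> UHP"
  using neg_inv_UHP[of z] by simp

lemma UHP_nz: "z \<in> UHP \<Longrightarrow> z \<noteq> 0"
  by (auto simp: UHP_def)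

lemma sq_const:
  fixes h1 h2 :: "complex \<Rightarrow> complex"
  assumes S: "connected S" and c1: "continuous_on S h1" and c2: "continuous_on S h2"
    and nz: "\<And>z. z \<in> S \<Longrightarrow> h2 z \<noteq> 0"
    and sq: "\<And>z. z \<in> S \<Longrightarrow> (h1 z)^2 = (h2 z)^2"
    and z0: "z0 \<in> S" "h1 z0 = h2 z0"
    and z: "z \<in> S"
  shows "h1 z = h2 z"
proof -
  define r where "r = (\<lambda>z. h1 z / h2 z)"
  have rc: "continuous_on S r" unfolding r_def using c1 c2 nz by (intro continuous_intros) auto
  have r01: "r z = 1 \<or> r z = -1" if "z \<in> S" for z
  proof -
    have "(r z)^2 = 1" using sq[OF that] nz[OF that] by (simp add: r_def power_divide)
    then show ?thesis by (simp add: power2_eq_1_iff)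
  qed
  have "r constant_on S"
  proof (rule continuous_discrete_range_constant[OF S rc])
    fix x assume x: "x \<in> S"
    show "\<exists>e>0. \<forall>y. y \<in> S \<and> r y \<noteq> r x \<longrightarrow> e \<le> norm (r y - r x)"
    proof (rule exI[of _ 1], intro conjI allI impI)
      fix y assume y: "y \<in> S \<and> r y \<noteq> r x"
      then have "r y - r x = 2 \<or> r y - r x = -2" using r01[OF x] r01[of y] by auto
      then show "1 \<le> norm (r y - r x)" by auto
    qed simp
  qed
  then obtain c where "\<And>x. x \<in> S \<Longrightarrow> r x = c" by (auto simp: constant_on_def)
  then have "r z = r z0" using z z0 by metis
  also have "r z0 = 1" using z0 nz by (simp add: r_def)
  finally show ?thesis using nz[OF z] by (simp add: r_def)
qed

lemma fpow_sq1: "z \<noteq> complex_of_real c \<Longrightarrow> 2 * e = 1 \<Longrightarrow> (fpow c e z)^2 = z - complex_of_real c"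
  unfolding fpow_def powr_def
  by (simp add: power2_eq_square exp_add[symmetric] distrib_right[symmetric] flip: of_real_add)

lemma fpow_sq2: "z \<noteq> complex_of_real c \<Longrightarrow> 2 * e = -1 \<Longrightarrow> (fpow c e z)^2 = inverse (z - complex_of_real c)"
proof -
  assume z: "z \<noteq> complex_of_real c" and e: "2 * e = -1"
  have "(fpow c e z)^2 = exp (complex_of_real (2*e) * Ln (z - complex_of_real c))"
    using z unfolding fpow_def powr_def
    by (simp add: power2_eq_square exp_add[symmetric] distrib_right[symmetric] flip: of_real_add)
  also have "\<dots> = inverse (z - complex_of_real c)" using z e by (simp add: exp_minus)
  finally show ?thesis .
qed

lemma fpow_sq1_UHP: "z \<in> UHP \<Longrightarrow> 2 * e = 1 \<Longrightarrow> (fpow c e z)^2 = z - complex_of_real c"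
  using fpow_sq1 UHP_ne by blast
lemma fpow_sq2_UHP: "z \<in> UHP \<Longrightarrow> 2 * e = -1 \<Longrightarrow> (fpow c e z)^2 = inverse (z - complex_of_real c)"
  using fpow_sq2 UHP_ne by blast

definition RQ :: "real \<Rightarrow> complex \<Rightarrow> complex" where
  "RQ t z = (z - complex_of_real (-t)) * (z - complex_of_real (-1/t)) * (z - complex_of_real (1/t)) * (z - complex_of_real t)"

lemma Qfac_sq: "z \<in> UHP \<Longrightarrow> (Qfac t z)^2 = inverse (RQ t z)"
  unfolding Qfac_def RQ_def by (simp add: power_mult_distrib fpow_sq2_UHP inverse_mult_distrib del: of_real_minus of_real_divide)

lemma RQ_inv: "z \<noteq> 0 \<Longrightarrow> t \<noteq> 0 \<Longrightarrow> RQ t (-1/z) * z^4 = RQ t z"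
  unfolding RQ_def by (simp add: field_simps) (simp add: algebra_simps power4_eq_xxxx power2_eq_square)

lemma RQ_nz: "z \<in> UHP \<Longrightarrow> RQ t z \<noteq> 0"
  unfolding RQ_def using UHP_ne by (simp del: of_real_minus of_real_divide)

lemma cont_neg_inv: "continuous_on UHP (\<lambda>z. -1/z)"
  by (intro continuous_intros) (auto simp: UHP_nz)

lemma Qfac_cont: "continuous_on UHP (Qfac t)"
  using Qfac_holo holomorphic_on_imp_continuous_on by fastforce

lemma Qfac_sym: assumes z: "z \<in> UHP" and t: "t \<noteq> 0"
  shows "Qfac t (-1/z) = - (z^2) * Qfac t z"
proof (rule sq_const[OF convex_connected[OF convex_UHP] _ _ _ _ ii_UHP _ z])
  show "continuous_on UHP (\<lambda>z. Qfac t (- 1 / z))"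
    by (rule continuous_on_compose2[OF Qfac_cont cont_neg_inv]) (auto intro: neg_inv_UHP')
  show "continuous_on UHP (\<lambda>z. - z\<^sup>2 * Qfac t z)"
    using Qfac_cont by (intro continuous_intros) auto
  show "- (w^2) * Qfac t w \<noteq> 0" if "w \<in> UHP" for w using that UHP_nz Qfac_nz by simp
  show "Qfac t (- 1 / \<i>) = - \<i>\<^sup>2 * Qfac t \<i>" by simp
  fix w assume w: "w \<in> UHP"
  have w': "-1/w \<in> UHP" by (rule neg_inv_UHP[OF w])
  have "(Qfac t (-1/w))^2 = inverse (RQ t (-1/w))" by (rule Qfac_sq[OF w'])
  also have "RQ t (-1/w) = RQ t w / w^4" using RQ_inv[OF UHP_nz[OF w] t] UHP_nz[OF w]
    by (simp add: eq_divide_eq)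
  also have "inverse (RQ t w / w^4) = (w^2)^2 * inverse (RQ t w)"
    by (simp add: power4_eq_xxxx power2_eq_square field_simps)
  also have "\<dots> = (- (w^2) * Qfac t w)^2" using Qfac_sq[OF w] by (simp add: power_mult_distrib)
  finally show "(Qfac t (-1/w))^2 = (- (w^2) * Qfac t w)^2" .
qed

definition P1 :: "real \<Rightarrow> real \<Rightarrow> complex \<Rightarrow> complex" where
  "P1 a b z = fpow (-a) (1/2) z * fpow (-1/b) (-1/2) z * fpow (1/a) (1/2) z * fpow b (-1/2) z"

lemma P1_holo: "(\<lambda>z. P1 a b z) holomorphic_on UHP"
  unfolding P1_def by (intro holomorphic_intros)

lemma P1_nz: "z \<in> UHP \<Longrightarrow> P1 a b z \<noteq> 0"
  unfolding P1_def using fpow_nz_UHP by simp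

definition NP :: "real \<Rightarrow> complex \<Rightarrow> complex" where
  "NP a z = (z - complex_of_real (-a)) * (z - complex_of_real (1/a))"
definition DP :: "real \<Rightarrow> complex \<Rightarrow> complex" where
  "DP b z = (z - complex_of_real (-1/b)) * (z - complex_of_real b)"

lemma P1_sq: "z \<in> UHP \<Longrightarrow> (P1 a b z)^2 = NP a z * inverse (DP b z)"
  unfolding P1_def NP_def DP_def
  by (simp add: power_mult_distrib fpow_sq1_UHP fpow_sq2_UHP inverse_mult_distrib mult_ac del: of_real_minus of_real_divide)

lemma NP_inv: "z \<noteq> 0 \<Longrightarrow> a \<noteq> 0 \<Longrightarrow> NP a (-1/z) = - NP a z / z^2"
  unfolding NP_def by (simp add: field_simps) (simp add: algebra_simps power2_eq_square)
lemma DP_inv: "z \<noteq> 0 \<Longrightarrow> b \<noteq> 0 \<Longrightarrow> DP b (-1/z) = - DP b z / z^2"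
  unfolding DP_def by (simp add: field_simps) (simp add: algebra_simps power2_eq_square)

lemma P1_sym: assumes z: "z \<in> UHP" and a: "a \<noteq> 0" and b: "b \<noteq> 0"
  shows "P1 a b (-1/z) = P1 a b z"
proof (rule sq_const[OF convex_connected[OF convex_UHP] _ _ _ _ ii_UHP _ z])
  show "continuous_on UHP (\<lambda>z. P1 a b (- 1 / z))"
    by (rule continuous_on_compose2[OF holomorphic_on_imp_continuous_on[OF P1_holo] cont_neg_inv]) (auto intro: neg_inv_UHP')
  show "continuous_on UHP (\<lambda>z. P1 a b z)"
    by (rule holomorphic_on_imp_continuous_on[OF P1_holo])
  show "P1 a b w \<noteq> 0" if "w \<in> UHP" for w using that P1_nz by simp
  show "P1 a b (- 1 / \<i>) = P1 a b \<i>" by simp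
  fix w assume w: "w \<in> UHP"
  have w': "-1/w \<in> UHP" by (rule neg_inv_UHP[OF w])
  have wz: "w \<noteq> 0" using UHP_nz[OF w] .
  show "(P1 a b (-1/w))^2 = (P1 a b w)^2"
    unfolding P1_sq[OF w] P1_sq[OF w'] NP_inv[OF wz a] DP_inv[OF wz b]
    using wz by (simp add: field_simps)
qed

lemma phi1_P: "phi1 a b t \<rho> z = - complex_of_real \<rho> * P1 a b z * Qfac t z"
  unfolding phi1_def P1_def by (simp add: mult_ac)

lemma phi2_P: "z \<in> UHP \<Longrightarrow> phi2 a b t \<rho> z = complex_of_real (1/\<rho>) * inverse (P1 a b z) * Qfac t z"
proof -
  assume z: "z \<in> UHP"
  have "(fpow (-a) (-1/2) z * fpow (-1/b) (1/2) z * fpow (1/a) (-1/2) z * fpow b (1/2) z) * P1 a b z = 1"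
    unfolding P1_def
    using fpow_inv_UHP[OF z, of "-1/2" "1/2"] fpow_inv_UHP[OF z, of "1/2" "-1/2"]
    by (simp add: mult_ac)
  then have "fpow (-a) (-1/2) z * fpow (-1/b) (1/2) z * fpow (1/a) (-1/2) z * fpow b (1/2) z = inverse (P1 a b z)"
    using P1_nz[OF z] by (simp add: field_simps)
  then show ?thesis unfolding phi2_def by (simp add: mult_ac)
qed

lemma phi1_sym: assumes z: "z \<in> UHP" and t: "t \<noteq> 0" and a: "a \<noteq> 0" and b: "b \<noteq> 0"
  shows "phi1 a b t \<rho> (-1/z) = - (z^2) * phi1 a b t \<rho> z"
  unfolding phi1_P P1_sym[OF z a b] Qfac_sym[OF z t] by (simp add: algebra_simps)

lemma phi2_sym: assumes z: "z \<in> UHP" and t: "t \<noteq> 0" and a: "a \<noteq> 0" and b: "b \<noteq> 0"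
  shows "phi2 a b t \<rho> (-1/z) = - (z^2) * phi2 a b t \<rho> z"
  unfolding phi2_P[OF neg_inv_UHP[OF z]] phi2_P[OF z] P1_sym[OF z a b] Qfac_sym[OF z t] by (simp add: algebra_simps)

lemma F1_sym: assumes z: "z \<in> UHP" and t: "t \<noteq> 0" and a: "a \<noteq> 0" and b: "b \<noteq> 0"
  shows "F1 a b t \<rho> (-1/z) = - (z^2) * F1 a b t \<rho> z"
  unfolding F1_def phi1_sym[OF z t a b] phi2_sym[OF z t a b] by (simp add: algebra_simps)
lemma F2_sym: assumes z: "z \<in> UHP" and t: "t \<noteq> 0" and a: "a \<noteq> 0" and b: "b \<noteq> 0"
  shows "F2 a b t \<rho> (-1/z) = - (z^2) * F2 a b t \<rho> z"
  unfolding F2_def phi1_sym[OF z t a b] phi2_sym[OF z t a b] by (simp add: algebra_simps)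
lemma F3_sym: assumes z: "z \<in> UHP" and t: "t \<noteq> 0"
  shows "dhc t (-1/z) = - (z^2) * dhc t z"
  unfolding dhc_def Qfac_sym[OF z t] by (simp add: algebra_simps)

lemma G_sym:
  assumes f: "f holomorphic_on UHP" and fs: "\<And>z. z \<in> UHP \<Longrightarrow> f (-1/z) = - (z^2) * f z"
    and z: "z \<in> UHP"
  shows "G f (-1/z) = - G f z"
proof -
  define K where "K = (\<lambda>z. G f (-1/z) + G f z)"
  have "\<exists>c. \<forall>x\<in>UHP. K x = c"
  proof (rule has_field_derivative_zero_constant[OF convex_UHP])
    fix x assume x: "x \<in> UHP"
    have x0: "x \<noteq> 0" using UHP_nz[OF x] .
    have d1: "((\<lambda>z. -1/z) has_field_derivative (1/x^2)) (at x)"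
      using x0 by (auto intro!: derivative_eq_intros simp: power2_eq_square)
    have d2: "((\<lambda>z. G f (-1/z)) has_field_derivative (f (-1/x) * (1/x^2))) (at x)"
      by (rule DERIV_chain2[OF G_deriv[OF f neg_inv_UHP[OF x]] d1])
    have "(K has_field_derivative (f (-1/x) * (1/x^2) + f x)) (at x)"
      unfolding K_def by (rule derivative_intros d2 G_deriv[OF f x])+
    moreover have "f (-1/x) * (1/x^2) + f x = 0" using fs[OF x] x0 by (simp add: field_simps)
    ultimately show "(K has_field_derivative 0) (at x within UHP)"
      by (simp add: has_field_derivative_at_within)
  qed
  then obtain c where c: "\<And>x. x \<in> UHP \<Longrightarrow> K x = c" by blast
  have "K \<i> = 0" by (simp add: K_def G_def)
  then have "K z = 0" using c[OF z] c[OF ii_UHP] by simp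
  then show ?thesis by (simp add: K_def eq_neg_iff_add_eq_0)
qed

lemma WX_sym: assumes z: "z \<in> UHP" and t: "t \<noteq> 0" and a: "a \<noteq> 0" and b: "b \<noteq> 0"
  shows "WX a b t \<rho> (-1/z) = - WX a b t \<rho> z"
  unfolding WX_eq
  by (simp only: G_sym[OF F1_holo F1_sym[OF _ t a b] z] G_sym[OF F2_holo F2_sym[OF _ t a b] z]
      G_sym[OF F3_holo F3_sym[OF _ t] z]) (simp add: vec_eq_iff forall_3)

lemma WX_ii: "WX a b t \<rho> \<i> = 0"
  unfolding WX_eq by (simp add: G_def vec_eq_iff forall_3)

definition strip :: "real \<Rightarrow> real \<Rightarrow> complex set" where
  "strip p q = {z. p < Re z \<and> Re z < q}"

lemma open_strip: "open (strip p q)"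
  unfolding strip_def by (intro open_Collect_conj open_halfspace_Re_gt open_halfspace_Re_lt)

lemma convex_strip: "convex (strip p q)"
proof -
  have "strip p q = {z. Re z > p} \<inter> {z. Re z < q}" by (auto simp: strip_def)
  then show ?thesis by (simp add: convex_Int convex_halfspace_Re_gt convex_halfspace_Re_lt)
qed

lemma real_in_strip: "p < s \<Longrightarrow> s < q \<Longrightarrow> complex_of_real s \<in> strip p q"
  by (simp add: strip_def)

lemma near_in_strip:
  assumes "p < s" "s < q" "dist z (complex_of_real s) < min (s - p) (q - s)"
  shows "z \<in> strip p q"
proof -
  have "\<bar>Re z - s\<bar> \<le> cmod (z - complex_of_real s)" using abs_Re_le_cmod[of "z - complex_of_real s"] by simp
  then show ?thesis using assms by (auto simp: strip_def dist_norm)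
qed

lemma isCont_within: assumes "isCont f x" shows "(f \<longlongrightarrow> f x) (at x within S)"
  using assms unfolding isCont_def by (rule tendsto_mono[OF at_le[OF subset_UNIV]])

lemma GI_neu:
  assumes f: "f holomorphic_on UHP" and g: "g holomorphic_on strip p q"
    and eq: "\<And>z. z \<in> UHP \<Longrightarrow> z \<in> strip p q \<Longrightarrow> f z = g z"
    and s: "p < s" "s < q" and im: "Im (g (complex_of_real s)) = 0"
  shows "((\<lambda>z. pderiv_dir (\<lambda>w. Re (G f w)) \<i> z) \<longlongrightarrow> 0) (at (complex_of_real s) within UHP)"
proof -
  have sS: "complex_of_real s \<in> strip p q" using s by (rule real_in_strip)
  have "isCont g (complex_of_real s)"
    using holomorphic_on_imp_continuous_on[OF g] open_strip sS continuous_on_eq_continuous_at by blast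
  then have "(g \<longlongrightarrow> g (complex_of_real s)) (at (complex_of_real s) within UHP)"
    by (rule isCont_within)
  then have "((\<lambda>z. Re (g z * \<i>)) \<longlongrightarrow> Re (g (complex_of_real s) * \<i>)) (at (complex_of_real s) within UHP)"
    by (intro tendsto_intros)
  then have l: "((\<lambda>z. Re (g z * \<i>)) \<longlongrightarrow> 0) (at (complex_of_real s) within UHP)"
    using im by simp
  show ?thesis
  proof (rule Lim_transform_within[OF l])
    show "0 < min (s - p) (q - s)" using s by simp
    fix z assume z: "z \<in> UHP" "0 < dist z (complex_of_real s)" "dist z (complex_of_real s) < min (s - p) (q - s)"
    then have "z \<in> strip p q" using near_in_strip s by blast
    then show "Re (g z * \<i>) = pderiv_dir (\<lambda>w. Re (G f w)) \<i> z"
      using z by (simp add: ReG_pderiv[OF f] eq)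
  qed
qed

lemma GI_dir:
  assumes f: "f holomorphic_on UHP" and g: "g holomorphic_on strip p q" and pq: "p < q"
    and eq: "\<And>z. z \<in> UHP \<Longrightarrow> z \<in> strip p q \<Longrightarrow> f z = g z"
    and re0: "\<And>x. p < x \<Longrightarrow> x < q \<Longrightarrow> Re (g (complex_of_real x)) = 0"
  shows "\<exists>c. \<forall>s\<in>{p<..<q}. ((\<lambda>z. Re (G f z)) \<longlongrightarrow> c) (at (complex_of_real s) within UHP)"
proof -
  define z0 where "z0 = complex_of_real ((p+q)/2)"
  have z0: "z0 \<in> strip p q" unfolding z0_def using pq by (intro real_in_strip) auto
  define H where "H = (\<lambda>z. contour_integral (linepath z0 z) g)"
  have Hd: "(H has_field_derivative g z) (at z)" if "z \<in> strip p q" for z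
    unfolding H_def by (rule prim_deriv[OF g open_strip convex_strip z0 that])
  have "\<exists>C. \<forall>x\<in>UHP \<inter> strip p q. G f x - H x = C"
  proof (rule has_field_derivative_zero_constant)
    show "convex (UHP \<inter> strip p q)" by (simp add: convex_Int convex_UHP convex_strip)
    fix x assume x: "x \<in> UHP \<inter> strip p q"
    have "((\<lambda>x. G f x - H x) has_field_derivative (f x - g x)) (at x)"
      using x by (intro derivative_intros G_deriv[OF f] Hd) auto
    then show "((\<lambda>x. G f x - H x) has_field_derivative 0) (at x within UHP \<inter> strip p q)"
      using x eq by (simp add: has_field_derivative_at_within)
  qed
  then obtain C where C0: "\<forall>x\<in>UHP \<inter> strip p q. G f x - H x = C" by blast
  have C: "\<And>x. x \<in> UHP \<Longrightarrow> x \<in> strip p q \<Longrightarrow> G f x = H x + C"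
    using C0 by (metis IntI add.commute diff_eq_eq)
  have "\<exists>c0. \<forall>x\<in>{p<..<q}. Re (H (complex_of_real x)) = c0"
  proof (rule has_derivative_zero_constant)
    show "convex {p<..<q}" by simp
    fix x assume x: "x \<in> {p<..<q}"
    have xs: "complex_of_real x \<in> strip p q" using x by (intro real_in_strip) auto
    have "((\<lambda>x. H (complex_of_real x)) has_derivative (\<lambda>h. g (complex_of_real x) * complex_of_real h)) (at x)"
      using has_derivative_compose[OF has_derivative_of_real[OF has_derivative_ident] Hd[OF xs, unfolded has_field_derivative_def]]
      by simp
    from bounded_linear.has_derivative[OF bounded_linear_Re this]
    have "((\<lambda>x. Re (H (complex_of_real x))) has_derivative (\<lambda>h. Re (g (complex_of_real x) * complex_of_real h))) (at x)" .
    moreover have "(\<lambda>h. Re (g (complex_of_real x) * complex_of_real h)) = (\<lambda>h. 0)"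
      using re0[of x] x by auto
    ultimately show "((\<lambda>x. Re (H (complex_of_real x))) has_derivative (\<lambda>h. 0)) (at x within {p<..<q})"
      by (simp add: has_derivative_at_withinI)
  qed
  then obtain c0 where c0: "\<And>x. p < x \<Longrightarrow> x < q \<Longrightarrow> Re (H (complex_of_real x)) = c0" by force
  show ?thesis
  proof (intro exI ballI)
    fix s assume s: "s \<in> {p<..<q}"
    then have s': "p < s" "s < q" by auto
    have sS: "complex_of_real s \<in> strip p q" using s' by (rule real_in_strip)
    have "isCont H (complex_of_real s)"
      using Hd[OF sS] by (rule DERIV_isCont)
    then have "(H \<longlongrightarrow> H (complex_of_real s)) (at (complex_of_real s) within UHP)"
      by (rule isCont_within)
    then have "((\<lambda>z. Re (H z) + Re C) \<longlongrightarrow> Re (H (complex_of_real s)) + Re C) (at (complex_of_real s) within UHP)"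
      by (intro tendsto_intros)
    then have l: "((\<lambda>z. Re (H z) + Re C) \<longlongrightarrow> c0 + Re C) (at (complex_of_real s) within UHP)"
      using c0[OF s'] by simp
    show "((\<lambda>z. Re (G f z)) \<longlongrightarrow> c0 + Re C) (at (complex_of_real s) within UHP)"
    proof (rule Lim_transform_within[OF l])
      show "0 < min (s - p) (q - s)" using s' by simp
      fix z assume z: "z \<in> UHP" "0 < dist z (complex_of_real s)" "dist z (complex_of_real s) < min (s - p) (q - s)"
      then have "z \<in> strip p q" using near_in_strip s' by blast
      then show "Re (H z) + Re C = Re (G f z)" using z C by simp
    qed
  qed
qed

definition fext :: "real \<Rightarrow> real \<Rightarrow> real \<Rightarrow> complex \<Rightarrow> complex" where
  "fext p c e z = (if c \<le> p then (z - complex_of_real c) powr complex_of_real e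
      else cis (pi * e) * (complex_of_real c - z) powr complex_of_real e)"

lemma fext_UHP: assumes z: "z \<in> UHP" shows "fext p c e z = fpow c e z"
proof (cases "c \<le> p")
  case True then show ?thesis by (simp add: fext_def fpow_def)
next
  case False
  have nz: "complex_of_real c - z \<noteq> 0" using UHP_ne[OF z, of c] by auto
  have im: "Im (complex_of_real c - z) < 0" using z by (simp add: UHP_def)
  have "Ln (z - complex_of_real c) = Ln (- (complex_of_real c - z))" by simp
  also have "\<dots> = Ln (complex_of_real c - z) + \<i> * pi"
    using Ln_minus[OF nz] im by simp
  finally have L: "Ln (z - complex_of_real c) = Ln (complex_of_real c - z) + \<i> * pi" .
  have "fpow c e z = exp (complex_of_real e * Ln (z - complex_of_real c))"
    using nz unfolding fpow_def powr_def by (auto simp: right_minus_eq)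
  also have "\<dots> = exp (\<i> * complex_of_real (pi * e)) * exp (complex_of_real e * Ln (complex_of_real c - z))"
    unfolding L by (simp add: distrib_left exp_add mult_ac)
  also have "\<dots> = fext p c e z"
    using False nz by (simp add: fext_def powr_def cis_conv_exp)
  finally show ?thesis by simp
qed

lemma fext_holo: assumes "c \<le> p \<or> q \<le> c" shows "(\<lambda>z. fext p c e z) holomorphic_on strip p q"
proof (cases "c \<le> p")
  case True
  have "z - complex_of_real c \<notin> \<real>\<^sub>\<le>\<^sub>0" if "z \<in> strip p q" for z
    using that True by (auto simp: strip_def complex_nonpos_Reals_iff)
  then show ?thesis using True unfolding fext_def by (auto intro!: holomorphic_intros)
next
  case False
  then have "q \<le> c" using assms by auto
  then have "complex_of_real c - z \<notin> \<real>\<^sub>\<le>\<^sub>0" if "z \<in> strip p q" for z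
    using that by (auto simp: strip_def complex_nonpos_Reals_iff)
  then show ?thesis using False unfolding fext_def by (auto intro!: holomorphic_intros)
qed

lemma fext_R: "c \<le> p \<Longrightarrow> c < x \<Longrightarrow> fext p c e (complex_of_real x) = complex_of_real ((x - c) powr e)"
  unfolding fext_def by (simp add: powr_of_real flip: of_real_diff)

lemma fext_L: "\<not> c \<le> p \<Longrightarrow> x < c \<Longrightarrow> fext p c e (complex_of_real x) = cis (pi * e) * complex_of_real ((c - x) powr e)"
proof -
  assume "\<not> c \<le> p" "x < c"
  have "(complex_of_real c - complex_of_real x) powr complex_of_real e = complex_of_real ((c - x) powr e)"
    using \<open>x < c\<close> by (simp add: powr_of_real flip: of_real_diff)
  then show ?thesis using \<open>\<not> c \<le> p\<close> unfolding fext_def by simp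
qed

lemma fext_L1: "\<not> c \<le> p \<Longrightarrow> x < c \<Longrightarrow> 2 * e = 1 \<Longrightarrow> fext p c e (complex_of_real x) = \<i> * complex_of_real ((c - x) powr e)"
proof -
  assume "\<not> c \<le> p" "x < c" "2 * e = 1"
  then have e: "pi * e = pi / 2" by simp
  show ?thesis using fext_L[OF \<open>\<not> c \<le> p\<close> \<open>x < c\<close>, of e] unfolding e by simp
qed

lemma fext_L2: "\<not> c \<le> p \<Longrightarrow> x < c \<Longrightarrow> 2 * e = -1 \<Longrightarrow> fext p c e (complex_of_real x) = - \<i> * complex_of_real ((c - x) powr e)"
proof -
  assume "\<not> c \<le> p" "x < c" "2 * e = -1"
  then have "e = - (1/2)" by simp
  then have e: "pi * e = - (pi / 2)" by simp
  have "cis (- (pi / 2)) = - \<i>" by (simp add: cis.ctr complex_eq_iff)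
  then show ?thesis using fext_L[OF \<open>\<not> c \<le> p\<close> \<open>x < c\<close>, of e] unfolding e by simp
qed

definition Qx :: "real \<Rightarrow> real \<Rightarrow> complex \<Rightarrow> complex" where
  "Qx p t z = fext p (-t) (-1/2) z * fext p (-1/t) (-1/2) z * fext p (1/t) (-1/2) z * fext p t (-1/2) z"
definition phi1x :: "real \<Rightarrow> real \<Rightarrow> real \<Rightarrow> real \<Rightarrow> real \<Rightarrow> complex \<Rightarrow> complex" where
  "phi1x p a b t \<rho> z = - complex_of_real \<rho> * fext p (-a) (1/2) z * fext p (-1/b) (-1/2) z
      * fext p (1/a) (1/2) z * fext p b (-1/2) z * Qx p t z"
definition phi2x :: "real \<Rightarrow> real \<Rightarrow> real \<Rightarrow> real \<Rightarrow> real \<Rightarrow> complex \<Rightarrow> complex" where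
  "phi2x p a b t \<rho> z = complex_of_real (1/\<rho>) * fext p (-a) (-1/2) z * fext p (-1/b) (1/2) z
      * fext p (1/a) (-1/2) z * fext p b (1/2) z * Qx p t z"
definition F1x where "F1x p a b t \<rho> = (\<lambda>w. (phi2x p a b t \<rho> w - phi1x p a b t \<rho> w) / 2)"
definition F2x where "F2x p a b t \<rho> = (\<lambda>w. \<i> * (phi2x p a b t \<rho> w + phi1x p a b t \<rho> w) / 2)"
definition F3x where "F3x p t = (\<lambda>w. \<i> * Qx p t w)"

lemma F1x_UHP: "z \<in> UHP \<Longrightarrow> F1x p a b t \<rho> z = F1 a b t \<rho> z"
  by (simp add: F1x_def F1_def phi1x_def phi2x_def phi1_def phi2_def Qx_def Qfac_def fext_UHP)
lemma F2x_UHP: "z \<in> UHP \<Longrightarrow> F2x p a b t \<rho> z = F2 a b t \<rho> z"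
  by (simp add: F2x_def F2_def phi1x_def phi2x_def phi1_def phi2_def Qx_def Qfac_def fext_UHP)
lemma F3x_UHP: "z \<in> UHP \<Longrightarrow> F3x p t z = dhc t z"
  by (simp add: F3x_def dhc_def Qx_def Qfac_def fext_UHP)

definition good :: "real \<Rightarrow> real \<Rightarrow> real \<Rightarrow> real \<Rightarrow> real \<Rightarrow> bool" where
  "good p q a b t \<longleftrightarrow> (\<forall>c\<in>{-t, -a, -1/b, -1/t, 1/t, 1/a, b, t}. c \<le> p \<or> q \<le> c)"

lemma fext_holo' [holomorphic_intros]: "c \<le> p \<or> q \<le> c \<Longrightarrow> (\<lambda>z. fext p c e z) holomorphic_on strip p q"
  by (rule fext_holo)

lemma Fx_holo:
  assumes "good p q a b t"
  shows "F1x p a b t \<rho> holomorphic_on strip p q" "F2x p a b t \<rho> holomorphic_on strip p q"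
    "F3x p t holomorphic_on strip p q"
proof -
  have g: "-t \<le> p \<or> q \<le> -t" "-a \<le> p \<or> q \<le> -a" "-1/b \<le> p \<or> q \<le> -1/b" "-1/t \<le> p \<or> q \<le> -1/t"
     "1/t \<le> p \<or> q \<le> 1/t" "1/a \<le> p \<or> q \<le> 1/a" "b \<le> p \<or> q \<le> b" "t \<le> p \<or> q \<le> t"
    using assms unfolding good_def by auto
  have Q: "(\<lambda>z. Qx p t z) holomorphic_on strip p q"
    unfolding Qx_def using g by (intro holomorphic_intros)
  have P1: "(\<lambda>z. phi1x p a b t \<rho> z) holomorphic_on strip p q"
    unfolding phi1x_def using g Q by (intro holomorphic_intros)
  have P2: "(\<lambda>z. phi2x p a b t \<rho> z) holomorphic_on strip p q"
    unfolding phi2x_def using g Q by (intro holomorphic_intros)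
  show "F1x p a b t \<rho> holomorphic_on strip p q" unfolding F1x_def using P1 P2 by (intro holomorphic_intros) auto
  show "F2x p a b t \<rho> holomorphic_on strip p q" unfolding F2x_def using P1 P2 by (intro holomorphic_intros) auto
  show "F3x p t holomorphic_on strip p q" unfolding F3x_def using Q by (intro holomorphic_intros)
qed

lemma chain:
  fixes a b t :: real
  assumes o: "0 < a" "0 < b" "0 < t" "1/t < 1/a" "1/a < b" "b < t"
  shows "a < t" "1/b < a" "1/t < 1/b" "0 < 1/t"
proof -
  show "a < t" using o inverse_less_iff_less[of t a] by (simp add: inverse_eq_divide)
  show "1/b < a" using o by (simp add: divide_less_eq mult.commute)
  show "1/t < 1/b" using o inverse_less_iff_less[of t b] by (simp add: inverse_eq_divide)
  show "0 < 1/t" using o by simp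
qed

lemma int0:
  assumes o: "0 < a" "0 < b" "0 < t" "1/t < 1/a" "1/a < b" "b < t" and x: "-t < x" "x < -a"
  shows "Re (F1x (-t) a b t \<rho> (complex_of_real x)) = 0" "Im (F2x (-t) a b t \<rho> (complex_of_real x)) = 0" "Im (F3x (-t) t (complex_of_real x)) = 0"
proof -
  note ch = chain[OF o]
  have f: "-t \<le> -t" "-t < x" "\<not> -a \<le> -t" "x < -a" "\<not> -(1/b) \<le> -t" "x < -(1/b)" "\<not> -(1/t) \<le> -t" "x < -(1/t)" "\<not> 1/t \<le> -t" "x < 1/t" "\<not> 1/a \<le> -t" "x < 1/a" "\<not> b \<le> -t" "x < b" "\<not> t \<le> -t" "x < t"
    using ch o x by linarith+
  show "Re (F1x (-t) a b t \<rho> (complex_of_real x)) = 0"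
    unfolding F1x_def phi1x_def phi2x_def Qx_def using f by (simp add: fext_R fext_L1 fext_L2)
  show "Im (F2x (-t) a b t \<rho> (complex_of_real x)) = 0"
    unfolding F2x_def phi1x_def phi2x_def Qx_def using f by (simp add: fext_R fext_L1 fext_L2)
  show "Im (F3x (-t) t (complex_of_real x)) = 0"
    unfolding F3x_def Qx_def using f by (simp add: fext_R fext_L1 fext_L2)
qed

lemma good0:
  assumes o: "0 < a" "0 < b" "0 < t" "1/t < 1/a" "1/a < b" "b < t"
  shows "good (-t) (-a) a b t" "-t < -a"
proof -
  note ch = chain[OF o]
  show "good (-t) (-a) a b t" unfolding good_def using ch o by (simp; linarith)
  show "-t < -a" using ch o by linarith
qed

lemma int1:
  assumes o: "0 < a" "0 < b" "0 < t" "1/t < 1/a" "1/a < b" "b < t" and x: "-a < x" "x < -(1/b)"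
  shows "Re (F2x (-a) a b t \<rho> (complex_of_real x)) = 0" "Im (F1x (-a) a b t \<rho> (complex_of_real x)) = 0" "Im (F3x (-a) t (complex_of_real x)) = 0"
proof -
  note ch = chain[OF o]
  have f: "-t \<le> -a" "-t < x" "-a \<le> -a" "-a < x" "\<not> -(1/b) \<le> -a" "x < -(1/b)" "\<not> -(1/t) \<le> -a" "x < -(1/t)" "\<not> 1/t \<le> -a" "x < 1/t" "\<not> 1/a \<le> -a" "x < 1/a" "\<not> b \<le> -a" "x < b" "\<not> t \<le> -a" "x < t"
    using ch o x by linarith+
  show "Re (F2x (-a) a b t \<rho> (complex_of_real x)) = 0"
    unfolding F2x_def phi1x_def phi2x_def Qx_def using f by (simp add: fext_R fext_L1 fext_L2)
  show "Im (F1x (-a) a b t \<rho> (complex_of_real x)) = 0"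
    unfolding F1x_def phi1x_def phi2x_def Qx_def using f by (simp add: fext_R fext_L1 fext_L2)
  show "Im (F3x (-a) t (complex_of_real x)) = 0"
    unfolding F3x_def Qx_def using f by (simp add: fext_R fext_L1 fext_L2)
qed

lemma good1:
  assumes o: "0 < a" "0 < b" "0 < t" "1/t < 1/a" "1/a < b" "b < t"
  shows "good (-a) (-(1/b)) a b t" "-a < -(1/b)"
proof -
  note ch = chain[OF o]
  show "good (-a) (-(1/b)) a b t" unfolding good_def using ch o by (simp; linarith)
  show "-a < -(1/b)" using ch o by linarith
qed

lemma int2:
  assumes o: "0 < a" "0 < b" "0 < t" "1/t < 1/a" "1/a < b" "b < t" and x: "-(1/b) < x" "x < -(1/t)"
  shows "Re (F1x (-(1/b)) a b t \<rho> (complex_of_real x)) = 0" "Im (F2x (-(1/b)) a b t \<rho> (complex_of_real x)) = 0" "Im (F3x (-(1/b)) t (complex_of_real x)) = 0"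
proof -
  note ch = chain[OF o]
  have f: "-t \<le> -(1/b)" "-t < x" "-a \<le> -(1/b)" "-a < x" "-(1/b) \<le> -(1/b)" "-(1/b) < x" "\<not> -(1/t) \<le> -(1/b)" "x < -(1/t)" "\<not> 1/t \<le> -(1/b)" "x < 1/t" "\<not> 1/a \<le> -(1/b)" "x < 1/a" "\<not> b \<le> -(1/b)" "x < b" "\<not> t \<le> -(1/b)" "x < t"
    using ch o x by linarith+
  show "Re (F1x (-(1/b)) a b t \<rho> (complex_of_real x)) = 0"
    unfolding F1x_def phi1x_def phi2x_def Qx_def using f by (simp add: fext_R fext_L1 fext_L2)
  show "Im (F2x (-(1/b)) a b t \<rho> (complex_of_real x)) = 0"
    unfolding F2x_def phi1x_def phi2x_def Qx_def using f by (simp add: fext_R fext_L1 fext_L2)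
  show "Im (F3x (-(1/b)) t (complex_of_real x)) = 0"
    unfolding F3x_def Qx_def using f by (simp add: fext_R fext_L1 fext_L2)
qed

lemma good2:
  assumes o: "0 < a" "0 < b" "0 < t" "1/t < 1/a" "1/a < b" "b < t"
  shows "good (-(1/b)) (-(1/t)) a b t" "-(1/b) < -(1/t)"
proof -
  note ch = chain[OF o]
  show "good (-(1/b)) (-(1/t)) a b t" unfolding good_def using ch o by (simp; linarith)
  show "-(1/b) < -(1/t)" using ch o by linarith
qed

lemma int3:
  assumes o: "0 < a" "0 < b" "0 < t" "1/t < 1/a" "1/a < b" "b < t" and x: "-(1/t) < x" "x < 1/t"
  shows "Re (F2x (-(1/t)) a b t \<rho> (complex_of_real x)) = 0" "Re (F3x (-(1/t)) t (complex_of_real x)) = 0"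
proof -
  note ch = chain[OF o]
  have f: "-t \<le> -(1/t)" "-t < x" "-a \<le> -(1/t)" "-a < x" "-(1/b) \<le> -(1/t)" "-(1/b) < x" "-(1/t) \<le> -(1/t)" "-(1/t) < x" "\<not> 1/t \<le> -(1/t)" "x < 1/t" "\<not> 1/a \<le> -(1/t)" "x < 1/a" "\<not> b \<le> -(1/t)" "x < b" "\<not> t \<le> -(1/t)" "x < t"
    using ch o x by linarith+
  show "Re (F2x (-(1/t)) a b t \<rho> (complex_of_real x)) = 0"
    unfolding F2x_def phi1x_def phi2x_def Qx_def using f by (simp add: fext_R fext_L1 fext_L2)
  show "Re (F3x (-(1/t)) t (complex_of_real x)) = 0"
    unfolding F3x_def Qx_def using f by (simp add: fext_R fext_L1 fext_L2)
qed

lemma good3: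
  assumes o: "0 < a" "0 < b" "0 < t" "1/t < 1/a" "1/a < b" "b < t"
  shows "good (-(1/t)) (1/t) a b t" "-(1/t) < 1/t"
proof -
  note ch = chain[OF o]
  show "good (-(1/t)) (1/t) a b t" unfolding good_def using ch o by (simp; linarith)
  show "-(1/t) < 1/t" using ch o by linarith
qed

lemma int4:
  assumes o: "0 < a" "0 < b" "0 < t" "1/t < 1/a" "1/a < b" "b < t" and x: "1/t < x" "x < 1/a"
  shows "Im (F2x (1/t) a b t \<rho> (complex_of_real x)) = 0" "Im (F3x (1/t) t (complex_of_real x)) = 0"
proof -
  note ch = chain[OF o]
  have f: "-t \<le> 1/t" "-t < x" "-a \<le> 1/t" "-a < x" "-(1/b) \<le> 1/t" "-(1/b) < x" "-(1/t) \<le> 1/t" "-(1/t) < x" "1/t \<le> 1/t" "1/t < x" "\<not> 1/a \<le> 1/t" "x < 1/a" "\<not> b \<le> 1/t" "x < b" "\<not> t \<le> 1/t" "x < t"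
    using ch o x by linarith+
  show "Im (F2x (1/t) a b t \<rho> (complex_of_real x)) = 0"
    unfolding F2x_def phi1x_def phi2x_def Qx_def using f by (simp add: fext_R fext_L1 fext_L2)
  show "Im (F3x (1/t) t (complex_of_real x)) = 0"
    unfolding F3x_def Qx_def using f by (simp add: fext_R fext_L1 fext_L2)
qed

lemma good4:
  assumes o: "0 < a" "0 < b" "0 < t" "1/t < 1/a" "1/a < b" "b < t"
  shows "good (1/t) (1/a) a b t" "1/t < 1/a"
proof -
  note ch = chain[OF o]
  show "good (1/t) (1/a) a b t" unfolding good_def using ch o by (simp; linarith)
  show "1/t < 1/a" using ch o by linarith
qed

lemma int5:
  assumes o: "0 < a" "0 < b" "0 < t" "1/t < 1/a" "1/a < b" "b < t" and x: "1/a < x" "x < b"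
  shows "Im (F1x (1/a) a b t \<rho> (complex_of_real x)) = 0" "Im (F3x (1/a) t (complex_of_real x)) = 0"
proof -
  note ch = chain[OF o]
  have f: "-t \<le> 1/a" "-t < x" "-a \<le> 1/a" "-a < x" "-(1/b) \<le> 1/a" "-(1/b) < x" "-(1/t) \<le> 1/a" "-(1/t) < x" "1/t \<le> 1/a" "1/t < x" "1/a \<le> 1/a" "1/a < x" "\<not> b \<le> 1/a" "x < b" "\<not> t \<le> 1/a" "x < t"
    using ch o x by linarith+
  show "Im (F1x (1/a) a b t \<rho> (complex_of_real x)) = 0"
    unfolding F1x_def phi1x_def phi2x_def Qx_def using f by (simp add: fext_R fext_L1 fext_L2)
  show "Im (F3x (1/a) t (complex_of_real x)) = 0"
    unfolding F3x_def Qx_def using f by (simp add: fext_R fext_L1 fext_L2)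
qed

lemma good5:
  assumes o: "0 < a" "0 < b" "0 < t" "1/t < 1/a" "1/a < b" "b < t"
  shows "good (1/a) (b) a b t" "1/a < b"
proof -
  note ch = chain[OF o]
  show "good (1/a) (b) a b t" unfolding good_def using ch o by (simp; linarith)
  show "1/a < b" using ch o by linarith
qed

lemma int6:
  assumes o: "0 < a" "0 < b" "0 < t" "1/t < 1/a" "1/a < b" "b < t" and x: "b < x" "x < t"
  shows "Im (F2x (b) a b t \<rho> (complex_of_real x)) = 0" "Im (F3x (b) t (complex_of_real x)) = 0"
proof -
  note ch = chain[OF o]
  have f: "-t \<le> b" "-t < x" "-a \<le> b" "-a < x" "-(1/b) \<le> b" "-(1/b) < x" "-(1/t) \<le> b" "-(1/t) < x" "1/t \<le> b" "1/t < x" "1/a \<le> b" "1/a < x" "b \<le> b" "b < x" "\<not> t \<le> b" "x < t"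
    using ch o x by linarith+
  show "Im (F2x (b) a b t \<rho> (complex_of_real x)) = 0"
    unfolding F2x_def phi1x_def phi2x_def Qx_def using f by (simp add: fext_R fext_L1 fext_L2)
  show "Im (F3x (b) t (complex_of_real x)) = 0"
    unfolding F3x_def Qx_def using f by (simp add: fext_R fext_L1 fext_L2)
qed

lemma good6:
  assumes o: "0 < a" "0 < b" "0 < t" "1/t < 1/a" "1/a < b" "b < t"
  shows "good (b) (t) a b t" "b < t"
proof -
  note ch = chain[OF o]
  show "good (b) (t) a b t" unfolding good_def using ch o by (simp; linarith)
  show "b < t" using ch o by linarith
qed

lemma WX_c1: "(\<lambda>w. WX a b t \<rho> w $ 1) = (\<lambda>w. Re (G (F1 a b t \<rho>) w))" by (simp add: WX_eq)
lemma WX_c2: "(\<lambda>w. WX a b t \<rho> w $ 2) = (\<lambda>w. Re (G (F2 a b t \<rho>) w))" by (simp add: WX_eq)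
lemma WX_c3: "(\<lambda>w. WX a b t \<rho> w $ 3) = (\<lambda>w. Re (G (dhc t) w))" by (simp add: WX_eq)

lemma dir1: assumes "good p q a b t" "p < q" "\<And>x. p < x \<Longrightarrow> x < q \<Longrightarrow> Re (F1x p a b t \<rho> (complex_of_real x)) = 0"
  shows "\<exists>c. \<forall>s\<in>{p<..<q}. ((\<lambda>z. WX a b t \<rho> z $ 1) \<longlongrightarrow> c) (at (complex_of_real s) within UHP)"
  unfolding WX_c1 by (rule GI_dir[OF F1_holo Fx_holo(1)[OF assms(1)] assms(2) _ assms(3)]) (simp add: F1x_UHP)
lemma dir2: assumes "good p q a b t" "p < q" "\<And>x. p < x \<Longrightarrow> x < q \<Longrightarrow> Re (F2x p a b t \<rho> (complex_of_real x)) = 0"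
  shows "\<exists>c. \<forall>s\<in>{p<..<q}. ((\<lambda>z. WX a b t \<rho> z $ 2) \<longlongrightarrow> c) (at (complex_of_real s) within UHP)"
  unfolding WX_c2 by (rule GI_dir[OF F2_holo Fx_holo(2)[OF assms(1)] assms(2) _ assms(3)]) (simp add: F2x_UHP)
lemma dir3: assumes "good p q a b t" "p < q" "\<And>x. p < x \<Longrightarrow> x < q \<Longrightarrow> Re (F3x p t (complex_of_real x)) = 0"
  shows "\<exists>c. \<forall>s\<in>{p<..<q}. ((\<lambda>z. WX a b t \<rho> z $ 3) \<longlongrightarrow> c) (at (complex_of_real s) within UHP)"
  unfolding WX_c3 by (rule GI_dir[OF F3_holo Fx_holo(3)[OF assms(1)] assms(2) _ assms(3)]) (simp add: F3x_UHP)

lemma neu1: assumes "good p q a b t" "\<And>x. p < x \<Longrightarrow> x < q \<Longrightarrow> Im (F1x p a b t \<rho> (complex_of_real x)) = 0" "p < s" "s < q"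
  shows "((\<lambda>z. pderiv_dir (\<lambda>w. WX a b t \<rho> w $ 1) \<i> z) \<longlongrightarrow> 0) (at (complex_of_real s) within UHP)"
  unfolding WX_c1 by (rule GI_neu[OF F1_holo Fx_holo(1)[OF assms(1)] _ assms(3,4) assms(2)[OF assms(3,4)]]) (simp add: F1x_UHP)
lemma neu2: assumes "good p q a b t" "\<And>x. p < x \<Longrightarrow> x < q \<Longrightarrow> Im (F2x p a b t \<rho> (complex_of_real x)) = 0" "p < s" "s < q"
  shows "((\<lambda>z. pderiv_dir (\<lambda>w. WX a b t \<rho> w $ 2) \<i> z) \<longlongrightarrow> 0) (at (complex_of_real s) within UHP)"
  unfolding WX_c2 by (rule GI_neu[OF F2_holo Fx_holo(2)[OF assms(1)] _ assms(3,4) assms(2)[OF assms(3,4)]]) (simp add: F2x_UHP)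
lemma neu3: assumes "good p q a b t" "\<And>x. p < x \<Longrightarrow> x < q \<Longrightarrow> Im (F3x p t (complex_of_real x)) = 0" "p < s" "s < q"
  shows "((\<lambda>z. pderiv_dir (\<lambda>w. WX a b t \<rho> w $ 3) \<i> z) \<longlongrightarrow> 0) (at (complex_of_real s) within UHP)"
  unfolding WX_c3 by (rule GI_neu[OF F3_holo Fx_holo(3)[OF assms(1)] _ assms(3,4) assms(2)[OF assms(3,4)]]) (simp add: F3x_UHP)

lemma flt_inv:
  assumes s: "s \<noteq> 0"
  shows "filterlim (\<lambda>z. -1/z) (at (complex_of_real (-1/s)) within UHP) (at (complex_of_real s) within UHP)"
  unfolding filterlim_at
proof
  show "\<forall>\<^sub>F z in at (complex_of_real s) within UHP. -1/z \<in> UHP \<and> -1/z \<noteq> complex_of_real (-1/s)"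
    unfolding eventually_at_filter
  proof (rule always_eventually, intro allI impI)
    fix z assume z: "z \<noteq> complex_of_real s" "z \<in> UHP"
    have "z \<noteq> 0" using UHP_nz[OF z(2)] .
    then show "-1/z \<in> UHP \<and> -1/z \<noteq> complex_of_real (-1/s)"
      using z neg_inv_UHP[OF z(2)] s by (auto simp: field_simps)
  qed
  show "((\<lambda>z. -1/z) \<longlongrightarrow> complex_of_real (-1/s)) (at (complex_of_real s) within UHP)"
    using s by (auto intro!: tendsto_eq_intros)
qed

lemma WX_sym': "z \<in> UHP \<Longrightarrow> t \<noteq> 0 \<Longrightarrow> a \<noteq> 0 \<Longrightarrow> b \<noteq> 0 \<Longrightarrow> WX a b t \<rho> (-(1/z)) = - WX a b t \<rho> z"
  using WX_sym[of z t a b \<rho>] by simp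

lemma mirror:
  assumes t: "t \<noteq> 0" and a: "a \<noteq> 0" and b: "b \<noteq> 0"
    and hyp: "\<forall>s\<in>I. ((\<lambda>z. WX a b t \<rho> z $ j) \<longlongrightarrow> c) (at (complex_of_real s) within UHP)"
    and s: "s \<noteq> 0" "-1/s \<in> I"
  shows "((\<lambda>z. WX a b t \<rho> z $ j) \<longlongrightarrow> -c) (at (complex_of_real s) within UHP)"
proof -
  have "((\<lambda>z. WX a b t \<rho> (-1/z) $ j) \<longlongrightarrow> c) (at (complex_of_real s) within UHP)"
    using filterlim_compose[OF hyp[rule_format, OF s(2)] flt_inv[OF s(1)]] .
  then have l: "((\<lambda>z. - (WX a b t \<rho> (-1/z) $ j)) \<longlongrightarrow> -c) (at (complex_of_real s) within UHP)"
    by (rule tendsto_minus)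
  show ?thesis
  proof (rule Lim_transform_eventually[OF l])
    show "\<forall>\<^sub>F z in at (complex_of_real s) within UHP. - (WX a b t \<rho> (-1/z) $ j) = WX a b t \<rho> z $ j"
      unfolding eventually_at_filter
      by (rule always_eventually) (simp add: WX_sym'[OF _ t a b])
  qed
qed

lemma img_sym:
  assumes t: "t \<noteq> 0" and a: "a \<noteq> 0" and b: "b \<noteq> 0"
  shows "(\<lambda>p. 2 *\<^sub>R WX a b t \<rho> \<i> - p) ` (WX a b t \<rho> ` UHP) = WX a b t \<rho> ` UHP"
proof -
  have "(\<lambda>p. - p) ` (WX a b t \<rho> ` UHP) = WX a b t \<rho> ` UHP"
  proof safe
    fix z assume z: "z \<in> UHP"
    show "- WX a b t \<rho> z \<in> WX a b t \<rho> ` UHP"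
      using WX_sym[OF z t a b] by (metis image_eqI neg_inv_UHP[OF z])
    have "WX a b t \<rho> z = - WX a b t \<rho> (-1/z)" using WX_sym[OF z t a b] by simp
    then show "WX a b t \<rho> z \<in> (\<lambda>p. - p) ` WX a b t \<rho> ` UHP"
      by (metis image_eqI neg_inv_UHP[OF z])
  qed
  then show ?thesis by (simp add: WX_ii)
qed

lemma inv_interval:
  fixes p q s :: real
  assumes "0 < p" "p < s" "s < q"
  shows "-1/p < -1/s" "-1/s < -1/q"
proof -
  have "1/s < 1/p" using assms by (intro divide_strict_left_mono) auto
  then show "-1/p < -1/s" by simp
  have "1/q < 1/s" using assms by (intro divide_strict_left_mono) auto
  then show "-1/s < -1/q" by simp
qed

lemma psc1:
  fixes W :: "complex \<Rightarrow> real^3"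
  assumes "\<forall>s\<in>I. ((\<lambda>z. W z $ 1) \<longlongrightarrow> c) (at (complex_of_real s) within UHP)"
    "\<forall>s\<in>I. ((\<lambda>z. pderiv_dir (\<lambda>w. W w $ 2) \<i> z) \<longlongrightarrow> 0) (at (complex_of_real s) within UHP)"
    "\<forall>s\<in>I. ((\<lambda>z. pderiv_dir (\<lambda>w. W w $ 3) \<i> z) \<longlongrightarrow> 0) (at (complex_of_real s) within UHP)"
  shows "planar_symmetry_curve W I 1 c"
  unfolding planar_symmetry_curve_def
proof (intro ballI conjI allI impI)
  fix s k assume s: "s \<in> I" and k: "k \<noteq> (1::3)"
  then have "k = 2 \<or> k = 3" using exhaust_3[of k] by auto
  then show "((\<lambda>z. pderiv_dir (\<lambda>w. W w $ k) \<i> z) \<longlongrightarrow> 0) (at (complex_of_real s) within UHP)"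
    using assms s by auto
qed (use assms in auto)

lemma psc2:
  fixes W :: "complex \<Rightarrow> real^3"
  assumes "\<forall>s\<in>I. ((\<lambda>z. W z $ 2) \<longlongrightarrow> c) (at (complex_of_real s) within UHP)"
    "\<forall>s\<in>I. ((\<lambda>z. pderiv_dir (\<lambda>w. W w $ 1) \<i> z) \<longlongrightarrow> 0) (at (complex_of_real s) within UHP)"
    "\<forall>s\<in>I. ((\<lambda>z. pderiv_dir (\<lambda>w. W w $ 3) \<i> z) \<longlongrightarrow> 0) (at (complex_of_real s) within UHP)"
  shows "planar_symmetry_curve W I 2 c"
  unfolding planar_symmetry_curve_def
proof (intro ballI conjI allI impI)
  fix s k assume s: "s \<in> I" and k: "k \<noteq> (2::3)"
  then have "k = 1 \<or> k = 3" using exhaust_3[of k] by auto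
  then show "((\<lambda>z. pderiv_dir (\<lambda>w. W w $ k) \<i> z) \<longlongrightarrow> 0) (at (complex_of_real s) within UHP)"
    using assms s by auto
qed (use assms in auto)

theorem mainTheorem2:
  fixes a b t \<rho> :: real
  assumes "a > 0" "b > 0" "t > 0" "1/t < 1/a" "1/a < b" "b < t" "\<rho> > 0"
  shows "\<exists>(k::real) (Q::real^3 \<Rightarrow> real^3) (c::real^3) A A' B c2 c3 d2 d3.
     k > 0 \<and> orthogonal_transformation Q \<and>
     (let Y = (\<lambda>z. k *\<^sub>R Q (WX a b t \<rho> z) + c) in
        minimal_surface_on UHP Y
      \<and> maps_to_xline Y ({t<..} \<union> {..<-t}) c2 c3
      \<and> maps_to_xline Y {-1/t<..<1/t} d2 d3
      \<and> planar_symmetry_curve Y {-t<..<-a} 1 A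
      \<and> planar_symmetry_curve Y {1/t<..<1/a} 1 (-A)
      \<and> planar_symmetry_curve Y {-a<..<-1/b} 2 (-B)
      \<and> planar_symmetry_curve Y {1/a<..<b} 2 B
      \<and> planar_symmetry_curve Y {-1/b<..<-1/t} 1 A'
      \<and> planar_symmetry_curve Y {b<..<t} 1 (-A')
      \<and> (\<lambda>p. 2 *\<^sub>R Y \<i> - p) ` (Y ` UHP) = Y ` UHP)"
proof -
  note o = assms(1-6)
  note ch = chain[OF o]
  have t0: "t \<noteq> 0" and a0: "a \<noteq> 0" and b0: "b \<noteq> 0" and r0: "\<rho> \<noteq> 0" using assms by auto
  let ?W = "WX a b t \<rho>"
  obtain A where A: "\<forall>s\<in>{(-t)<..<(-a)}. ((\<lambda>z. ?W z $ 1) \<longlongrightarrow> A) (at (complex_of_real s) within UHP)"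
    using dir1[OF good0[OF o] int0(1)[OF o]] by blast
  obtain Bm where Bm: "\<forall>s\<in>{(-a)<..<(-(1/b))}. ((\<lambda>z. ?W z $ 2) \<longlongrightarrow> Bm) (at (complex_of_real s) within UHP)"
    using dir2[OF good1[OF o] int1(1)[OF o]] by blast
  obtain A' where A': "\<forall>s\<in>{(-(1/b))<..<(-(1/t))}. ((\<lambda>z. ?W z $ 1) \<longlongrightarrow> A') (at (complex_of_real s) within UHP)"
    using dir1[OF good2[OF o] int2(1)[OF o]] by blast
  obtain d2 where d2: "\<forall>s\<in>{(-(1/t))<..<(1/t)}. ((\<lambda>z. ?W z $ 2) \<longlongrightarrow> d2) (at (complex_of_real s) within UHP)"
    using dir2[OF good3[OF o] int3(1)[OF o]] by blast
  obtain d3 where d3: "\<forall>s\<in>{(-(1/t))<..<(1/t)}. ((\<lambda>z. ?W z $ 3) \<longlongrightarrow> d3) (at (complex_of_real s) within UHP)"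
    using dir3[OF good3[OF o] int3(2)[OF o]] by blast
  note g0 = good0[OF o] and g1 = good1[OF o] and g2 = good2[OF o] and g3 = good3[OF o]
    and g4 = good4[OF o] and g5 = good5[OF o] and g6 = good6[OF o]
  have P2: "maps_to_xline ?W ({t<..} \<union> {..<-t}) (-d2) (-d3)"
    unfolding maps_to_xline_def
  proof (intro ballI conjI)
    fix s assume s: "s \<in> {t<..} \<union> {..<-t}"
    have m: "s \<noteq> 0 \<and> -1/s \<in> {(-(1/t))<..<(1/t)}"
    proof (cases "s > t")
      case True
      have "1/s < 1/t" using True o by (intro divide_strict_left_mono) auto
      moreover have "0 < 1/s" using True o by simp
      ultimately have "-(1/t) < -(1/s)" "-(1/s) < 1/t" using ch(4) by linarith+
      then show ?thesis using True o by auto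
    next
      case False
      then have "-s > t" using s by auto
      then have "s < 0" using o by linarith
      have "1/(-s) < 1/t" using o \<open>-s > t\<close> \<open>s < 0\<close> by (intro divide_strict_left_mono) (auto simp: mult_neg_pos)
      moreover have "0 < 1/(-s)" using \<open>-s > t\<close> o by simp
      moreover have "1/s < 0" using \<open>s < 0\<close> by simp
      moreover have "1/(-s) = -(1/s)" by simp
      ultimately have "-(1/t) < -(1/s)" "-(1/s) < 1/t" using ch(4) by linarith+
      then show ?thesis using \<open>-s > t\<close> o by auto
    qed
    show "((\<lambda>z. ?W z $ 2) \<longlongrightarrow> -d2) (at (complex_of_real s) within UHP)"
      using mirror[OF t0 a0 b0 d2] m by blast
    show "((\<lambda>z. ?W z $ 3) \<longlongrightarrow> -d3) (at (complex_of_real s) within UHP)"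
      using mirror[OF t0 a0 b0 d3] m by blast
  qed
  have P3: "maps_to_xline ?W {-1/t<..<1/t} d2 d3"
    unfolding maps_to_xline_def using d2 d3 by simp
  have P4: "planar_symmetry_curve ?W {-t<..<-a} 1 A"
    by (rule psc1) (use A in auto, auto intro!: neu2[OF g0(1) int0(2)[OF o]] neu3[OF g0(1) int0(3)[OF o]])
  have P5: "planar_symmetry_curve ?W {1/t<..<1/a} 1 (-A)"
  proof (rule psc1)
    show "\<forall>s\<in>{1/t<..<1/a}. ((\<lambda>z. ?W z $ 1) \<longlongrightarrow> -A) (at (complex_of_real s) within UHP)"
    proof
      fix s assume s: "s \<in> {1/t<..<1/a}"
      then have "-1/(1/t) < -1/s" "-1/s < -1/(1/a)" using inv_interval[of "1/t" s "1/a"] ch by auto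
      then have "s \<noteq> 0" "-1/s \<in> {(-t)<..<(-a)}" using s ch by auto
      then show "((\<lambda>z. ?W z $ 1) \<longlongrightarrow> -A) (at (complex_of_real s) within UHP)"
        using mirror[OF t0 a0 b0 A] by blast
    qed
  qed (auto intro!: neu2[OF g4(1) int4(1)[OF o]] neu3[OF g4(1) int4(2)[OF o]])
  have P6: "planar_symmetry_curve ?W {-a<..<-1/b} 2 (- (- Bm))"
    by (rule psc2) (use Bm in auto, auto intro!: neu1[OF g1(1) int1(2)[OF o]] neu3[OF g1(1) int1(3)[OF o]])
  have P7: "planar_symmetry_curve ?W {1/a<..<b} 2 (-Bm)"
  proof (rule psc2)
    show "\<forall>s\<in>{1/a<..<b}. ((\<lambda>z. ?W z $ 2) \<longlongrightarrow> -Bm) (at (complex_of_real s) within UHP)"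
    proof
      fix s assume s: "s \<in> {1/a<..<b}"
      then have "-1/(1/a) < -1/s" "-1/s < -1/b" using inv_interval[of "1/a" s b] ch o by auto
      then have "s \<noteq> 0" "-1/s \<in> {(-a)<..<(-(1/b))}" using s ch o by auto
      then show "((\<lambda>z. ?W z $ 2) \<longlongrightarrow> -Bm) (at (complex_of_real s) within UHP)"
        using mirror[OF t0 a0 b0 Bm] by blast
    qed
  qed (auto intro!: neu1[OF g5(1) int5(1)[OF o]] neu3[OF g5(1) int5(2)[OF o]])
  have P8: "planar_symmetry_curve ?W {-1/b<..<-1/t} 1 A'"
    by (rule psc1) (use A' in auto, auto intro!: neu2[OF g2(1) int2(2)[OF o]] neu3[OF g2(1) int2(3)[OF o]])
  have P9: "planar_symmetry_curve ?W {b<..<t} 1 (-A')"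
  proof (rule psc1)
    show "\<forall>s\<in>{b<..<t}. ((\<lambda>z. ?W z $ 1) \<longlongrightarrow> -A') (at (complex_of_real s) within UHP)"
    proof
      fix s assume s: "s \<in> {b<..<t}"
      then have "-1/b < -1/s" "-1/s < -1/t" using inv_interval[of b s t] ch o by auto
      then have "s \<noteq> 0" "-1/s \<in> {(-(1/b))<..<(-(1/t))}" using s ch o by auto
      then show "((\<lambda>z. ?W z $ 1) \<longlongrightarrow> -A') (at (complex_of_real s) within UHP)"
        using mirror[OF t0 a0 b0 A'] by blast
    qed
  qed (auto intro!: neu2[OF g6(1) int6(1)[OF o]] neu3[OF g6(1) int6(2)[OF o]])
  have P10: "(\<lambda>p. 2 *\<^sub>R ?W \<i> - p) ` (?W ` UHP) = ?W ` UHP" by (rule img_sym[OF t0 a0 b0])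
  have P1: "minimal_surface_on UHP ?W" by (rule WX_minimal[OF r0])
  have Yeq: "(\<lambda>z. (1::real) *\<^sub>R id (WX a b t \<rho> z) + (0::real^3)) = ?W" by (simp add: id_def)
  show ?thesis
    apply (rule exI[of _ 1], rule exI[of _ id], rule exI[of _ 0], rule exI[of _ A], rule exI[of _ A'],
        rule exI[of _ "-Bm"], rule exI[of _ "-d2"], rule exI[of _ "-d3"], rule exI[of _ d2], rule exI[of _ d3])
    unfolding Yeq Let_def
    using P1 P2 P3 P4 P5 P6 P7 P8 P9 P10 orthogonal_transformation_id by (simp add: id_def)
qed

end
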